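(* Let $\lambda$ be a Young diagram with $\ell$ corners (removable boxes) $c_1,\dots,c_\ell$ and with addable boxes $s_0,s_1,\dots,s_\ell$. Set $X_i = x\,t\,\mathrm{wt}(c_i)$ for $1\le i\le \ell$ and $U_k=\mathrm{wt}(s_k)$ for $0\le k\le\ell$. Then \[ \sum_{k=0}^{\ell} \frac{1}{U_k^{\,j}}\, \frac{1}{\displaystyle \prod_{\substack{i=0\\ i\neq k}}^{\ell} \Bigl(1 - \frac{U_i}{U_k}\Bigr)} = \begin{cases} 1,&j=0,\\ 0,&1\leq j\leq \ell,\\ \dfrac{(-1)^\ell}{X_1\cdots X_{\ell}}, &j=\ell+1. \end{cases} \]
   Context: Here $x$ and $t$ are two variables (indeterminates). For a box $b$ of (or addable to) a Young diagram, its weight is $\mathrm{wt}(b)=x^{l'(b)}t^{a'(b)}$, where $l'(b)$ is the coleg and $a'(b)$ the coarm of $b$; i.e., for a box in row $r$ and column $c$ (rows and columns numbered from $1$, English convention with the first row on top), $l'(b)=r-1$ and $a'(b)=c-1$. A Young diagram with $\ell$ corners has exactly $\ell+1$ addable boxes. *)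

theory Defs
  imports Main
begin

text \<open>Boxes are pairs (row, column), numbered from 1, English convention.\<close>

definition young :: "nat list \<Rightarrow> bool" where
  "young lam \<longleftrightarrow> sorted_wrt (\<ge>) lam \<and> 0 \<notin> set lam"

definition boxes :: "nat list \<Rightarrow> (nat \<times> nat) set" where
  "boxes lam = {(r, c). 1 \<le> r \<and> r \<le> length lam \<and> 1 \<le> c \<and> c \<le> lam ! (r - 1)}"

definition corners :: "nat list \<Rightarrow> (nat \<times> nat) set" where
  "corners lam = {(r, c). (r, c) \<in> boxes lam \<and> (r + 1, c) \<notin> boxes lam \<and> (r, c + 1) \<notin> boxes lam}"

definition addable :: "nat list \<Rightarrow> (nat \<times> nat) set" where
  "addable lam = {(r, c). 1 \<le> r \<and> 1 \<le> c \<and> (r, c) \<notin> boxes lam \<and>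
       (r = 1 \<or> (r - 1, c) \<in> boxes lam) \<and> (c = 1 \<or> (r, c - 1) \<in> boxes lam)}"

text \<open>Weight wt(b) = x^(coleg) t^(coarm) = x^(r-1) t^(c-1).\<close>
definition wt :: "'a::field \<Rightarrow> 'a \<Rightarrow> nat \<times> nat \<Rightarrow> 'a" where
  "wt x t b = x ^ (fst b - 1) * t ^ (snd b - 1)"

end

theory Submission
  imports Defs
begin


definition LL :: "'a::field set \<Rightarrow> ('a \<Rightarrow> 'a) \<Rightarrow> 'a" where
  "LL S w = (\<Sum>a\<in>S. w a / (\<Prod>b\<in>S-{a}. a - b))"

lemma LL_cong: "(\<And>a. a \<in> S \<Longrightarrow> f a = g a) \<Longrightarrow> LL S f = LL S g"
  unfolding LL_def by (rule sum.cong) auto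

lemma LL_add: "LL S (\<lambda>a. f a + g a) = LL S f + LL S g"
  unfolding LL_def by (simp add: add_divide_distrib sum.distrib)

lemma LL_mult: "LL S (\<lambda>a. k * f a) = k * LL S f"
  unfolding LL_def by (simp add: sum_distrib_left mult.assoc)

lemma LL_single: "LL {a} f = f a"
  unfolding LL_def by simp

lemma LL_remove:
  assumes "finite S" "c \<in> S"
  shows "LL S (\<lambda>a. w a * (a - c)) = LL (S-{c}) w"
proof -
  have "LL S (\<lambda>a. w a * (a - c)) = w c * (c - c) / (\<Prod>b\<in>S-{c}. c - b)
     + (\<Sum>a\<in>S-{c}. w a * (a - c) / (\<Prod>b\<in>S-{a}. a - b))"
    unfolding LL_def using assms by (simp add: sum.remove)
  also have "\<dots> = (\<Sum>a\<in>S-{c}. w a / (\<Prod>b\<in>S-{c}-{a}. a - b))"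
  proof -
    have "w a * (a - c) / (\<Prod>b\<in>S-{a}. a - b) = w a / (\<Prod>b\<in>S-{c}-{a}. a - b)"
      if a: "a \<in> S-{c}" for a
    proof -
      have "(\<Prod>b\<in>S-{a}. a - b) = (a - c) * (\<Prod>b\<in>S-{a}-{c}. a - b)"
        using a assms by (subst prod.remove[of _ c]) auto
      moreover have "S-{a}-{c} = S-{c}-{a}" by auto
      moreover have "a - c \<noteq> 0" using a by auto
      ultimately show ?thesis by simp
    qed
    then show ?thesis by (auto intro: sum.cong)
  qed
  finally show ?thesis unfolding LL_def by simp
qed

lemma LL_main:
  "finite S \<Longrightarrow> card S = Suc k \<Longrightarrow>
    (\<forall>m\<le>k. LL S (\<lambda>a. a ^ m) = (if m = k then 1 else 0)) \<and>
    (0 \<notin> S \<longrightarrow> LL S inverse = (-1) ^ k / \<Prod> S)"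
proof (induction k arbitrary: S)
  case 0
  then obtain a where S: "S = {a}" using card_1_singletonE by auto
  show ?case by (simp add: S LL_single divide_inverse)
next
  case (Suc k)
  from Suc.prems obtain c where c: "c \<in> S" by fastforce
  have "card (S-{c}) = Suc k" using Suc.prems c by simp
  then obtain d where d: "d \<in> S-{c}" by (metis card.empty ex_in_conv nat.simps(3))
  from c d have cd: "c \<in> S" "d \<in> S" "c \<noteq> d" by auto
  have cT: "card (S-{c}) = Suc k" "card (S-{d}) = Suc k"
    using Suc.prems cd by auto
  have fin: "finite (S-{c})" "finite (S-{d})" using Suc.prems by auto
  note IHc = Suc.IH[OF fin(1) cT(1)] and IHd = Suc.IH[OF fin(2) cT(2)]
  have e1: "LL S (\<lambda>a. a) + (-c) * LL S (\<lambda>a. 1) = LL (S-{c}) (\<lambda>a. 1)"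
  proof -
    have "LL S (\<lambda>a. a) + (-c) * LL S (\<lambda>a. 1) = LL S (\<lambda>a. 1 * (a - c))"
      by (simp add: LL_add[symmetric] LL_mult[symmetric])
    also have "\<dots> = LL (S-{c}) (\<lambda>a. 1)" using LL_remove[OF Suc.prems(1) cd(1)] .
    finally show ?thesis .
  qed
  have e2: "LL S (\<lambda>a. a) + (-d) * LL S (\<lambda>a. 1) = LL (S-{d}) (\<lambda>a. 1)"
  proof -
    have "LL S (\<lambda>a. a) + (-d) * LL S (\<lambda>a. 1) = LL S (\<lambda>a. 1 * (a - d))"
      by (simp add: LL_add[symmetric] LL_mult[symmetric])
    also have "\<dots> = LL (S-{d}) (\<lambda>a. 1)" using LL_remove[OF Suc.prems(1) cd(2)] .
    finally show ?thesis .
  qed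
  have "LL (S-{c}) (\<lambda>a. 1) = LL (S-{d}) (\<lambda>a. 1)"
  proof -
    have "LL (S-{c}) (\<lambda>a. a ^ 0) = LL (S-{d}) (\<lambda>a. a ^ 0)"
      using IHc IHd by (simp only: zero_le)
    then show ?thesis by simp
  qed
  with e1 e2 have "(d - c) * LL S (\<lambda>a. 1) = 0" by (simp add: algebra_simps) (metis eq_iff_diff_eq_0)
  hence F0: "LL S (\<lambda>a. 1) = 0" using cd by simp
  have step: "LL S (\<lambda>a. a ^ Suc m) = LL (S-{c}) (\<lambda>a. a ^ m) + c * LL S (\<lambda>a. a ^ m)" for m
  proof -
    have "LL S (\<lambda>a. a ^ Suc m) = LL S (\<lambda>a. a ^ m * (a - c) + c * a ^ m)"
      by (rule LL_cong) (simp add: algebra_simps)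
    also have "\<dots> = LL (S-{c}) (\<lambda>a. a ^ m) + c * LL S (\<lambda>a. a ^ m)"
      by (simp add: LL_add LL_mult LL_remove[OF Suc.prems(1) cd(1)])
    finally show ?thesis .
  qed
  have A: "m \<le> Suc k \<Longrightarrow> LL S (\<lambda>a. a ^ m) = (if m = Suc k then 1 else 0)" for m
  proof (induction m)
    case 0 then show ?case using F0 by simp
  next
    case (Suc m)
    then show ?case using step[of m] IHc by auto
  qed
  have B: "LL S inverse = (-1) ^ Suc k / \<Prod> S" if z: "0 \<notin> S"
  proof -
    have "LL S (\<lambda>a. 1) = LL S (\<lambda>a. inverse a * (a - c) + c * inverse a)"
    proof (rule LL_cong)
      fix a assume "a \<in> S"
      with z have "a \<noteq> 0" by auto
      then show "1 = inverse a * (a - c) + c * inverse a"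
        by (simp add: algebra_simps)
    qed
    also have "\<dots> = LL (S-{c}) inverse + c * LL S inverse"
      by (simp add: LL_add LL_mult LL_remove[OF Suc.prems(1) cd(1)])
    finally have e: "0 = (-1) ^ k / \<Prod> (S-{c}) + c * LL S inverse"
      using F0 IHc z by simp
    define P where "P = \<Prod> (S-{c})"
    have PS: "\<Prod> S = c * P"
      using Suc.prems cd unfolding P_def by (simp add: prod.remove)
    have nz: "P \<noteq> 0" "c \<noteq> 0" using z fin cd unfolding P_def by auto
    have e2: "c * LL S inverse = - ((-1) ^ k / P)"
      using e unfolding P_def[symmetric] eq_neg_iff_add_eq_0 by (simp only: add.commute eq_commute)
    have "LL S inverse = (c * LL S inverse) / c" using nz(2) by simp
    also have "\<dots> = - ((-1) ^ k / P) / c" by (simp only: e2)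
    also have "\<dots> = (-1) ^ Suc k / (c * P)"
      by (simp add: divide_divide_eq_left mult.commute)
    finally show ?thesis using PS by simp
  qed
  show ?case using A B by auto
qed


definition hd0 :: "nat list \<Rightarrow> nat" where "hd0 lam = (case lam of [] \<Rightarrow> 0 | b # _ \<Rightarrow> b)"
definition sh :: "nat \<times> nat \<Rightarrow> nat \<times> nat" where "sh s = (Suc (fst s), snd s)"

lemma boxes_Nil: "boxes [] = {}" by (auto simp: boxes_def)

lemma boxes_Cons_mem: "(r,c) \<in> boxes (a#rest) \<longleftrightarrow>
   1 \<le> r \<and> 1 \<le> c \<and> (r = 1 \<longrightarrow> c \<le> a) \<and> (r \<noteq> 1 \<longrightarrow> (r-1,c) \<in> boxes rest)"
  unfolding boxes_def by (cases r; cases "r - 1") auto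

lemma boxes_row1: "(1,c) \<in> boxes rest \<longleftrightarrow> 1 \<le> c \<and> c \<le> hd0 rest"
  by (cases rest) (auto simp: boxes_Nil boxes_Cons_mem hd0_def)

lemma boxes_row1': "(Suc 0,c) \<in> boxes rest \<longleftrightarrow> 1 \<le> c \<and> c \<le> hd0 rest"
  using boxes_row1 by simp

lemma addable_Nil: "addable [] = {(1,1)}"
  by (auto simp: addable_def boxes_Nil)

lemma addable_Cons_mem: "(r,c) \<in> addable (a#rest) \<longleftrightarrow>
   (r = 1 \<and> c = Suc a) \<or> (r \<ge> 2 \<and> (r-1,c) \<in> addable rest \<and> (r = 2 \<longrightarrow> c \<le> a))"
proof (cases "r \<le> 1")
  case True
  then show ?thesis unfolding addable_def
    by (cases r) (auto simp: boxes_Cons_mem)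
next
  case False
  then obtain r' where r: "r = Suc r'" "r' \<ge> 1" by (cases r) auto
  show ?thesis unfolding addable_def using r
    by (cases "r' = 1") (auto simp: boxes_Cons_mem)
qed

lemma corners_Cons_mem: "(r,c) \<in> corners (a#rest) \<longleftrightarrow>
   (r = 1 \<and> c = a \<and> hd0 rest < a) \<or> (r \<ge> 2 \<and> (r-1,c) \<in> corners rest)"
proof (cases "r \<le> 1")
  case True
  then show ?thesis unfolding corners_def
    by (cases r) (auto simp: boxes_Cons_mem boxes_row1')
next
  case False
  then obtain r' where r: "r = Suc r'" "r' \<ge> 1" by (cases r) auto
  show ?thesis unfolding corners_def using r
    by (auto simp: boxes_Cons_mem boxes_def)
qed

lemma addable_row1: "s \<in> addable lam \<Longrightarrow> fst s = 1 \<Longrightarrow> s = (1, Suc (hd0 lam))"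
  by (cases lam; cases s) (auto simp: addable_Nil addable_Cons_mem hd0_def)

lemma addable_p: "(1, Suc (hd0 lam)) \<in> addable lam"
  by (cases lam) (auto simp: addable_Nil addable_Cons_mem hd0_def)

lemma addable_fst: "s \<in> addable lam \<Longrightarrow> fst s \<ge> 1"
  by (auto simp: addable_def)

lemma corners_fst: "s \<in> corners lam \<Longrightarrow> fst s \<ge> 1"
  by (auto simp: corners_def boxes_def)

lemma addable_Cons: "addable (a#rest) =
   insert (1, Suc a) (sh ` {s\<in>addable rest. fst s = 1 \<longrightarrow> snd s \<le> a})"
proof (rule set_eqI)
  fix z :: "nat \<times> nat"
  obtain r c where z: "z = (r,c)" by fastforce
  show "z \<in> addable (a#rest) \<longleftrightarrow> z \<in> insert (1, Suc a) (sh ` {s\<in>addable rest. fst s = 1 \<longrightarrow> snd s \<le> a})"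
    unfolding z addable_Cons_mem
  proof
    assume "r = 1 \<and> c = Suc a \<or> 2 \<le> r \<and> (r - 1, c) \<in> addable rest \<and> (r = 2 \<longrightarrow> c \<le> a)"
    then show "(r, c) \<in> insert (1, Suc a) (sh ` {s \<in> addable rest. fst s = 1 \<longrightarrow> snd s \<le> a})"
    proof
      assume h: "2 \<le> r \<and> (r - 1, c) \<in> addable rest \<and> (r = 2 \<longrightarrow> c \<le> a)"
      have "(r,c) = sh (r-1,c)" using h by (simp add: sh_def)
      moreover have "(r-1,c) \<in> {s \<in> addable rest. fst s = 1 \<longrightarrow> snd s \<le> a}"
        using h by auto
      ultimately show ?thesis by blast
    qed auto
  next
    assume "(r, c) \<in> insert (1, Suc a) (sh ` {s \<in> addable rest. fst s = 1 \<longrightarrow> snd s \<le> a})"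
    then show "r = 1 \<and> c = Suc a \<or> 2 \<le> r \<and> (r - 1, c) \<in> addable rest \<and> (r = 2 \<longrightarrow> c \<le> a)"
      by (auto simp: sh_def dest: addable_fst)
  qed
qed

lemma corners_Cons: "corners (a#rest) =
   (if hd0 rest < a then {(1,a)} else {}) \<union> sh ` corners rest"
proof (rule set_eqI)
  fix z :: "nat \<times> nat"
  obtain r c where z: "z = (r,c)" by fastforce
  show "z \<in> corners (a#rest) \<longleftrightarrow> z \<in> (if hd0 rest < a then {(1,a)} else {}) \<union> sh ` corners rest"
    unfolding z corners_Cons_mem
  proof
    assume "r = 1 \<and> c = a \<and> hd0 rest < a \<or> 2 \<le> r \<and> (r - 1, c) \<in> corners rest"
    then show "(r, c) \<in> (if hd0 rest < a then {(1,a)} else {}) \<union> sh ` corners rest"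
    proof
      assume h: "2 \<le> r \<and> (r - 1, c) \<in> corners rest"
      have "(r,c) = sh (r-1,c)" using h by (simp add: sh_def)
      then show ?thesis using h by blast
    qed auto
  next
    assume "(r, c) \<in> (if hd0 rest < a then {(1,a)} else {}) \<union> sh ` corners rest"
    then show "r = 1 \<and> c = a \<and> hd0 rest < a \<or> 2 \<le> r \<and> (r - 1, c) \<in> corners rest"
      by (auto simp: sh_def dest: corners_fst split: if_splits)
  qed
qed

lemma inj_sh: "inj sh" by (auto simp: inj_def sh_def)

lemma wt_sh: assumes h: "fst s \<ge> 1" shows "wt x t (sh s) = x * wt x t s"
proof -
  obtain r c where s: "s = (r, c)" by fastforce
  with h have "r \<ge> 1" by simp
  then obtain r' where "r = Suc r'" by (cases r) auto
  then show ?thesis by (simp add: s wt_def sh_def)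
qed

lemma prod_sh:
  assumes "finite B" "\<forall>s\<in>B. fst s \<ge> 1"
  shows "(\<Prod>s\<in>sh ` B. k * wt x t s) = x ^ card B * (\<Prod>s\<in>B. k * wt x t s)"
proof -
  have "(\<Prod>s\<in>sh ` B. k * wt x t s) = (\<Prod>s\<in>B. k * wt x t (sh s))"
    by (subst prod.reindex) (auto intro: inj_on_subset[OF inj_sh])
  also have "\<dots> = (\<Prod>s\<in>B. x * (k * wt x t s))"
    using assms by (intro prod.cong) (auto simp: wt_sh)
  also have "\<dots> = x ^ card B * (\<Prod>s\<in>B. k * wt x t s)"
    by (simp add: prod.distrib)
  finally show ?thesis .
qed

lemma young_Cons: "young (a#rest) \<Longrightarrow> young rest \<and> hd0 rest \<le> a \<and> a \<ge> 1"
  by (cases rest) (auto simp: young_def hd0_def)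

lemma comb_main:
  fixes x t :: "'a::field"
  shows "young lam \<Longrightarrow> finite (addable lam) \<and> finite (corners lam) \<and>
    card (addable lam) = card (corners lam) + 1 \<and>
    (\<Prod>s\<in>addable lam. wt x t s) = (\<Prod>c\<in>corners lam. x * t * wt x t c)"
proof (induction lam)
  case Nil
  have "corners [] = {}" by (auto simp: corners_def boxes_Nil)
  then show ?case by (simp add: addable_Nil wt_def)
next
  case (Cons a rest)
  from young_Cons[OF Cons.prems] have y: "young rest" "hd0 rest \<le> a" "a \<ge> 1" by auto
  note IH = Cons.IH[OF y(1)]
  let ?A = "addable rest" and ?C = "corners rest" and ?p = "(1, Suc (hd0 rest))"
  have pA: "?p \<in> ?A" by (rule addable_p)
  have fA: "\<forall>s\<in>?A. fst s \<ge> 1" and fC: "\<forall>s\<in>?C. fst s \<ge> 1"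
    using addable_fst corners_fst by blast+
  have notin0: "(1, Suc a) \<notin> sh ` B" if "\<forall>s\<in>B. fst s \<ge> 1" for B
    using that by (auto simp: sh_def)
  have notin: "(1, Suc a) \<notin> sh ` ?A" "(1, Suc a) \<notin> sh ` (?A - {?p})"
    using notin0[of ?A] notin0[of "?A - {?p}"] fA by auto
  have wt1: "wt x t (1, Suc a) = t ^ a" by (simp add: wt_def)
  show ?case
  proof (cases "hd0 rest < a")
    case True
    have filt: "{s\<in>?A. fst s = 1 \<longrightarrow> snd s \<le> a} = ?A"
    proof (rule set_eqI, rule iffI)
      fix s assume s: "s \<in> ?A"
      show "s \<in> {s\<in>?A. fst s = 1 \<longrightarrow> snd s \<le> a}"
      proof (cases "fst s = 1")
        case True
        then have "s = ?p" using addable_row1[OF s] by simp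
        then show ?thesis using s \<open>hd0 rest < a\<close> by simp
      qed (use s in auto)
    qed auto
    have A: "addable (a#rest) = insert (1, Suc a) (sh ` ?A)"
      using addable_Cons filt by simp
    have C: "corners (a#rest) = insert (1,a) (sh ` ?C)"
      using corners_Cons True by simp
    have n1: "(1,a) \<notin> sh ` ?C" using fC by (auto simp: sh_def)
    have cA: "card (sh ` ?A) = card ?A" and cC: "card (sh ` ?C) = card ?C"
      by (auto intro!: card_image inj_on_subset[OF inj_sh])
    have PA: "(\<Prod>s\<in>sh ` ?A. 1 * wt x t s) = x ^ card ?A * (\<Prod>s\<in>?A. 1 * wt x t s)"
      by (rule prod_sh) (use IH fA in auto)
    have PC: "(\<Prod>s\<in>sh ` ?C. (x*t) * wt x t s) = x ^ card ?C * (\<Prod>s\<in>?C. (x*t) * wt x t s)"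
      by (rule prod_sh) (use IH fC in auto)
    have wc: "t * wt x t (1,a) = t ^ a" using y(3)
      by (cases a) (auto simp: wt_def)
    have fsh: "finite (sh ` ?A)" "finite (sh ` ?C)" using IH by auto
    have "(\<Prod>s\<in>addable (a#rest). wt x t s) = wt x t (1, Suc a) * (\<Prod>s\<in>sh ` ?A. wt x t s)"
      unfolding A using notin(1) fsh by simp
    also have "\<dots> = t ^ a * (x ^ card ?A * (\<Prod>s\<in>?A. wt x t s))"
      using PA wt1 by simp
    also have "\<dots> = (x * t ^ a) * (x ^ card ?C * (\<Prod>c\<in>?C. x * t * wt x t c))"
      using IH by (simp add: algebra_simps)
    also have "\<dots> = (x * t * wt x t (1,a)) * (\<Prod>c\<in>sh ` ?C. x * t * wt x t c)"
      using PC wc by (simp add: algebra_simps)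
    also have "\<dots> = (\<Prod>c\<in>corners (a#rest). x * t * wt x t c)"
      unfolding C using n1 fsh by simp
    finally have P: "(\<Prod>s\<in>addable (a#rest). wt x t s) = (\<Prod>c\<in>corners (a#rest). x * t * wt x t c)" .
    have "card (addable (a#rest)) = card (corners (a#rest)) + 1"
      unfolding A C using notin(1) n1 fsh cA cC IH by simp
    then show ?thesis using P A C IH by simp
  next
    case False
    with y have ba: "hd0 rest = a" by simp
    have filt: "{s\<in>?A. fst s = 1 \<longrightarrow> snd s \<le> a} = ?A - {?p}"
    proof (rule set_eqI, rule iffI)
      fix s assume "s \<in> {s\<in>?A. fst s = 1 \<longrightarrow> snd s \<le> a}"
      then show "s \<in> ?A - {?p}" using ba by auto
    next
      fix s assume s: "s \<in> ?A - {?p}"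
      then have "fst s \<noteq> 1" using addable_row1[of s rest] by auto
      then show "s \<in> {s\<in>?A. fst s = 1 \<longrightarrow> snd s \<le> a}" using s by auto
    qed
    have A: "addable (a#rest) = insert (1, Suc a) (sh ` (?A - {?p}))"
      using addable_Cons filt by simp
    have C: "corners (a#rest) = sh ` ?C"
      using corners_Cons False by simp
    have fA': "finite (?A - {?p})" using IH by simp
    have cA: "card (sh ` (?A - {?p})) = card ?A - 1"
      using pA IH by (simp add: card_image inj_on_subset[OF inj_sh])
    have cC: "card (sh ` ?C) = card ?C"
      by (simp add: card_image inj_on_subset[OF inj_sh])
    have cA2: "card (?A - {?p}) = card ?C" using IH pA by simp
    have PA: "(\<Prod>s\<in>sh ` (?A - {?p}). 1 * wt x t s) = x ^ card (?A - {?p}) * (\<Prod>s\<in>?A - {?p}. 1 * wt x t s)"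
      by (rule prod_sh) (use fA' fA in auto)
    have PC: "(\<Prod>s\<in>sh ` ?C. (x*t) * wt x t s) = x ^ card ?C * (\<Prod>s\<in>?C. (x*t) * wt x t s)"
      by (rule prod_sh) (use IH fC in auto)
    have rem: "(\<Prod>s\<in>?A. wt x t s) = t ^ a * (\<Prod>s\<in>?A - {?p}. wt x t s)"
    proof -
      have w: "wt x t ?p = t ^ a" by (simp add: wt_def ba)
      show ?thesis using prod.remove[of ?A ?p "wt x t"] IH pA w by simp
    qed
    have fsh: "finite (sh ` (?A - {?p}))" using fA' by simp
    have "(\<Prod>s\<in>addable (a#rest). wt x t s) = wt x t (1, Suc a) * (\<Prod>s\<in>sh ` (?A - {?p}). wt x t s)"
      unfolding A using notin(2) fsh by simp
    also have "\<dots> = t ^ a * (x ^ card ?C * (\<Prod>s\<in>?A - {?p}. wt x t s))"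
      using PA cA2 wt1 by simp
    also have "\<dots> = x ^ card ?C * (\<Prod>s\<in>?A. wt x t s)"
      using rem by (simp add: algebra_simps)
    also have "\<dots> = (\<Prod>c\<in>corners (a#rest). x * t * wt x t c)"
      using IH PC C by simp
    finally have P: "(\<Prod>s\<in>addable (a#rest). wt x t s) = (\<Prod>c\<in>corners (a#rest). x * t * wt x t c)" .
    have "card (addable (a#rest)) = card (corners (a#rest)) + 1"
      unfolding A C using notin(2) fsh cA cC IH by simp
    then show ?thesis using P A C IH fA' by simp
  qed
qed



theorem lemmaC0p1:
  fixes lam :: "nat list" and x t :: "'a::field" and j :: nat
  assumes "young lam"
    and "x \<noteq> 0" and "t \<noteq> 0"
    and "inj_on (wt x t) (addable lam)"
    and "j \<le> card (corners lam) + 1"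
  shows "(\<Sum>s\<in>addable lam. (1 / wt x t s ^ j) *
            (1 / (\<Prod>u\<in>addable lam - {s}. (1 - wt x t u / wt x t s))))
         = (if j = 0 then 1
            else if j \<le> card (corners lam) then 0
            else (- 1) ^ card (corners lam) / (\<Prod>c\<in>corners lam. x * t * wt x t c))"
proof -
  let ?A = "addable lam" and ?l = "card (corners lam)"
  define U where "U = wt x t ` ?A"
  note cm = comb_main[OF assms(1), of x t]
  have finA: "finite ?A" using cm by simp
  have finU: "finite U" using finA U_def by simp
  have cU: "card U = Suc ?l" using cm assms(4) U_def by (simp add: card_image)
  have nz: "wt x t s \<noteq> 0" for s using assms(2,3) by (simp add: wt_def)
  have U0: "0 \<notin> U" using nz U_def by auto
  have inj: "inj_on (wt x t) ?A" by fact
  have step1: "(\<Prod>u\<in>?A - {s}. (1 - wt x t u / wt x t s)) = (\<Prod>w\<in>U - {wt x t s}. (1 - w / wt x t s))"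
    if s: "s \<in> ?A" for s
  proof -
    have "U - {wt x t s} = wt x t ` (?A - {s})"
      unfolding U_def using inj_on_image_set_diff[OF inj, of ?A "{s}"] s by simp
    moreover have "inj_on (wt x t) (?A - {s})" using inj by (rule inj_on_subset) auto
    ultimately show ?thesis by (simp add: prod.reindex)
  qed
  have "(\<Sum>s\<in>?A. (1 / wt x t s ^ j) * (1 / (\<Prod>u\<in>?A - {s}. (1 - wt x t u / wt x t s))))
      = (\<Sum>s\<in>?A. (\<lambda>v. (1 / v ^ j) * (1 / (\<Prod>w\<in>U - {v}. (1 - w / v)))) (wt x t s))"
    by (intro sum.cong refl) (simp only: step1)
  also have "\<dots> = (\<Sum>v\<in>U. (1 / v ^ j) * (1 / (\<Prod>w\<in>U - {v}. (1 - w / v))))"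
    unfolding U_def using inj by (simp add: sum.reindex)
  also have "\<dots> = LL U (\<lambda>v. v ^ ?l / v ^ j)"
    unfolding LL_def
  proof (rule sum.cong)
    fix v assume v: "v \<in> U"
    have v0: "v \<noteq> 0" using v U0 by auto
    have c: "card (U - {v}) = ?l" using v cU finU by simp
    have "(\<Prod>w\<in>U - {v}. (1 - w / v)) = (\<Prod>w\<in>U - {v}. (v - w) / v)"
      using v0 by (intro prod.cong) (auto simp: diff_divide_distrib)
    also have "\<dots> = (\<Prod>w\<in>U - {v}. (v - w)) / v ^ ?l"
      using c by (simp add: prod_dividef)
    finally have "(\<Prod>w\<in>U - {v}. (1 - w / v)) = (\<Prod>w\<in>U - {v}. (v - w)) / v ^ ?l" .
    then show "(1 / v ^ j) * (1 / (\<Prod>w\<in>U - {v}. (1 - w / v))) = v ^ ?l / v ^ j / (\<Prod>w\<in>U - {v}. (v - w))"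
      by simp
  qed simp
  finally have L: "(\<Sum>s\<in>?A. (1 / wt x t s ^ j) * (1 / (\<Prod>u\<in>?A - {s}. (1 - wt x t u / wt x t s))))
      = LL U (\<lambda>v. v ^ ?l / v ^ j)" .
  note main = LL_main[OF finU cU]
  show ?thesis
  proof (cases "j \<le> ?l")
    case True
    have "LL U (\<lambda>v. v ^ ?l / v ^ j) = LL U (\<lambda>v. v ^ (?l - j))"
    proof (rule LL_cong)
      fix v assume "v \<in> U"
      with U0 have "v \<noteq> 0" by auto
      then show "v ^ ?l / v ^ j = v ^ (?l - j)" using power_diff[of v j ?l] True by simp
    qed
    also have "\<dots> = (if ?l - j = ?l then 1 else 0)" using main by simp
    finally have R: "LL U (\<lambda>v. v ^ ?l / v ^ j) = (if ?l - j = ?l then 1 else 0)" .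
    have E: "(if j = 0 then 1 else if j \<le> ?l then 0
            else (- 1) ^ ?l / (\<Prod>c\<in>corners lam. x * t * wt x t c)) = (if ?l - j = ?l then 1 else (0::'a))"
      using True by auto
    show ?thesis by (simp only: L R E)
  next
    case False
    with assms(5) have j: "j = Suc ?l" by simp
    have "LL U (\<lambda>v. v ^ ?l / v ^ j) = LL U inverse"
    proof (rule LL_cong)
      fix v assume "v \<in> U"
      with U0 have "v \<noteq> 0" by auto
      then have "v ^ ?l \<noteq> 0" by simp
      then have "v ^ ?l / (v * v ^ ?l) = 1 / v" by (rule nonzero_divide_mult_cancel_right)
      then show "v ^ ?l / v ^ j = inverse v" by (simp add: j divide_inverse)
    qed
    also have "\<dots> = (-1) ^ ?l / \<Prod> U" using main U0 by simp
    also have "\<Prod> U = (\<Prod>s\<in>?A. wt x t s)" unfolding U_def using inj by (simp add: prod.reindex)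
    also have "\<dots> = (\<Prod>c\<in>corners lam. x * t * wt x t c)" using cm by simp
    finally have R: "LL U (\<lambda>v. v ^ ?l / v ^ j) = (- 1) ^ ?l / (\<Prod>c\<in>corners lam. x * t * wt x t c)" .
    have E: "(if j = 0 then 1 else if j \<le> ?l then 0
            else (- 1) ^ ?l / (\<Prod>c\<in>corners lam. x * t * wt x t c)) = (- 1) ^ ?l / (\<Prod>c\<in>corners lam. x * t * wt x t c)"
      using j by simp
    show ?thesis by (simp only: L R E)
  qed
qed

end
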